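(* The class $\mathrm{TM}_r(d)$ is closed under ultraproducts and ultraroots. That is: (a) for every family $(G_i)_{i\in I}$ of graphs in $\mathrm{TM}_r(d)$ and every ultrafilter $U$ on $I$, the ultraproduct $\prod_{i\in I} G_i/U$ belongs to $\mathrm{TM}_r(d)$; and (b) for every graph $H$, if some ultrapower $\prod_{i\in I} H/U$ of $H$ (for an ultrafilter $U$ on an index set $I$) belongs to $\mathrm{TM}_r(d)$, then $H$ belongs to $\mathrm{TM}_r(d)$.
   Context: Graphs are simple undirected graphs (structures over an irreflexive symmetric binary relation $E$) of arbitrary cardinality. A tree model of $r$ labels and height $d$ is a pair $(t,S)$ where $t$ is an $(r+1)$-labeled rooted tree (a possibly infinite tree with a distinguished root whose nodes are partitioned into label classes $P_1,\dots,P_{r+1}$) and $S \subseteq [r]^2\times[d]$ such that: every root-to-leaf path has length exactly $d$; leaves are labeled from $[r]$ and internal nodes with $r+1$; $(i,j,l)\in S$ iff $(j,i,l)\in S$. It is a tree model of the graph whose vertices are the leaves of $t$, two leaves with labels $i,j$ at distance $2l$ in $t$ being adjacent iff $(i,j,l)\in S$. $\mathrm{TM}_r(d)$ is the class of all graphs isomorphic to a graph having such a tree model. The ultraproduct $\prod_{i\in I}A_i/U$ has as universe the classes of $\prod_i A_i$ under $\bar a\sim\bar b$ iff $\{i: a_i=b_i\}\in U$, with a relation holding on classes iff it holds coordinatewise on a set of indices in $U$; when all $A_i=A$ it is the ultrapower of $A$, and $A$ is its ultraroot. *)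

theory Defs
  imports Main "HOL-Library.FuncSet"
begin

type_synonym 'a graph = "'a set \<times> ('a \<Rightarrow> 'a \<Rightarrow> bool)"

definition is_graph :: "'a graph \<Rightarrow> bool" where
  "is_graph G \<longleftrightarrow>
     (\<forall>x y. snd G x y \<longrightarrow> x \<in> fst G \<and> y \<in> fst G) \<and>
     (\<forall>x. \<not> snd G x x) \<and>
     (\<forall>x y. snd G x y \<longrightarrow> snd G y x)"

definition graph_iso :: "'a graph \<Rightarrow> 'b graph \<Rightarrow> bool" where
  "graph_iso G H \<longleftrightarrow>
     (\<exists>f. bij_betw f (fst G) (fst H) \<and>
          (\<forall>x\<in>fst G. \<forall>y\<in>fst G. snd G x y \<longleftrightarrow> snd H (f x) (f y)))"

text \<open>A rooted tree is given by a node set N, a root rt and a parent map p: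
every non-root node has its parent in N, and every node reaches the root
after finitely many parent steps.  (The value of p at the root is irrelevant.)\<close>

definition rooted_tree :: "'n set \<Rightarrow> 'n \<Rightarrow> ('n \<Rightarrow> 'n) \<Rightarrow> bool" where
  "rooted_tree N rt p \<longleftrightarrow>
     rt \<in> N \<and> (\<forall>x\<in>N. x \<noteq> rt \<longrightarrow> p x \<in> N) \<and> (\<forall>x\<in>N. \<exists>k. (p ^^ k) x = rt)"

definition tree_leaf :: "'n set \<Rightarrow> 'n \<Rightarrow> ('n \<Rightarrow> 'n) \<Rightarrow> 'n \<Rightarrow> bool" where
  "tree_leaf N rt p x \<longleftrightarrow> x \<in> N \<and> \<not> (\<exists>y\<in>N. y \<noteq> rt \<and> p y = x)"

definition tree_depth :: "'n \<Rightarrow> ('n \<Rightarrow> 'n) \<Rightarrow> 'n \<Rightarrow> nat" where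
  "tree_depth rt p x = (LEAST k. (p ^^ k) x = rt)"

text \<open>Half of the tree distance between two leaves of the same depth: the
number of steps up to their least common ancestor.  For leaves u, v of depth d,
the distance in the tree is 2 * tree_half_dist p u v.\<close>

definition tree_half_dist :: "('n \<Rightarrow> 'n) \<Rightarrow> 'n \<Rightarrow> 'n \<Rightarrow> nat" where
  "tree_half_dist p u v = (LEAST k. (p ^^ k) u = (p ^^ k) v)"

definition tree_model ::
  "nat \<Rightarrow> nat \<Rightarrow> 'n set \<Rightarrow> 'n \<Rightarrow> ('n \<Rightarrow> 'n) \<Rightarrow> ('n \<Rightarrow> nat) \<Rightarrow> (nat \<times> nat \<times> nat) set \<Rightarrow> bool" where
  "tree_model r d N rt p lab S \<longleftrightarrow>
     rooted_tree N rt p \<and>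
     (\<forall>x\<in>N. tree_leaf N rt p x \<longrightarrow> tree_depth rt p x = d \<and> lab x \<in> {1..r}) \<and>
     (\<forall>x\<in>N. \<not> tree_leaf N rt p x \<longrightarrow> lab x = r + 1) \<and>
     S \<subseteq> {1..r} \<times> {1..r} \<times> {1..d} \<and>
     (\<forall>i j l. (i, j, l) \<in> S \<longleftrightarrow> (j, i, l) \<in> S)"

definition tm_graph ::
  "'n set \<Rightarrow> 'n \<Rightarrow> ('n \<Rightarrow> 'n) \<Rightarrow> ('n \<Rightarrow> nat) \<Rightarrow> (nat \<times> nat \<times> nat) set \<Rightarrow> 'n graph" where
  "tm_graph N rt p lab S =
     ({x. tree_leaf N rt p x},
      (\<lambda>u v. tree_leaf N rt p u \<and> tree_leaf N rt p v \<and>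
             (lab u, lab v, tree_half_dist p u v) \<in> S))"

text \<open>The node type of the tree is fixed to
'a set \<times> nat; this loses no generality: nodes without
leaf descendants can be pruned, and the remaining nodes are encoded by the
pair (set of leaves below, depth); infinite leafless trees use ({}, k).\<close>

definition in_TM :: "nat \<Rightarrow> nat \<Rightarrow> 'a graph \<Rightarrow> bool" where
  "in_TM r d G \<longleftrightarrow> is_graph G \<and>
     (\<exists>(N :: ('a set \<times> nat) set) rt p lab S.
        tree_model r d N rt p lab S \<and> graph_iso G (tm_graph N rt p lab S))"

definition ultrafilter_on :: "'i set \<Rightarrow> 'i set set \<Rightarrow> bool" where
  "ultrafilter_on I U \<longleftrightarrow>
     U \<subseteq> Pow I \<and> I \<in> U \<and> {} \<notin> U \<and>
     (\<forall>A B. A \<in> U \<longrightarrow> A \<subseteq> B \<longrightarrow> B \<subseteq> I \<longrightarrow> B \<in> U) \<and>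
     (\<forall>A\<in>U. \<forall>B\<in>U. A \<inter> B \<in> U) \<and>
     (\<forall>A. A \<subseteq> I \<longrightarrow> A \<in> U \<or> I - A \<in> U)"

definition ultra_equiv :: "'i set \<Rightarrow> 'i set set \<Rightarrow> ('i \<Rightarrow> 'a graph) \<Rightarrow> (('i \<Rightarrow> 'a) \<times> ('i \<Rightarrow> 'a)) set" where
  "ultra_equiv I U G =
     {(f, g). f \<in> (\<Pi>\<^sub>E i\<in>I. fst (G i)) \<and> g \<in> (\<Pi>\<^sub>E i\<in>I. fst (G i)) \<and> {i\<in>I. f i = g i} \<in> U}"

definition ultraproduct :: "'i set \<Rightarrow> 'i set set \<Rightarrow> ('i \<Rightarrow> 'a graph) \<Rightarrow> ('i \<Rightarrow> 'a) set graph" where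
  "ultraproduct I U G =
     ((\<Pi>\<^sub>E i\<in>I. fst (G i)) // ultra_equiv I U G,
      (\<lambda>X Y. X \<in> (\<Pi>\<^sub>E i\<in>I. fst (G i)) // ultra_equiv I U G \<and>
             Y \<in> (\<Pi>\<^sub>E i\<in>I. fst (G i)) // ultra_equiv I U G \<and>
             (\<exists>f\<in>X. \<exists>g\<in>Y. {i\<in>I. snd (G i) (f i) (g i)} \<in> U)))"

end

theory Submission
  imports Defs
begin

definition cw :: "nat \<Rightarrow> nat \<Rightarrow> 'a graph \<Rightarrow> ('a \<Rightarrow> nat) \<Rightarrow> ('a \<Rightarrow> 'a \<Rightarrow> nat) \<Rightarrow> (nat \<times> nat \<times> nat) set \<Rightarrow> bool" where
  "cw r d G lab dl S \<longleftrightarrow> S \<subseteq> {1..r} \<times> {1..r} \<times> {1..d} \<and> (\<forall>i j l. (i, j, l) \<in> S \<longleftrightarrow> (j, i, l) \<in> S) \<and>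
     (\<forall>u\<in>fst G. lab u \<in> {1..r}) \<and>
     (\<forall>u\<in>fst G. \<forall>v\<in>fst G. dl u v \<le> d \<and> (dl u v = 0 \<longleftrightarrow> u = v) \<and> dl u v = dl v u \<and>
        (\<forall>w\<in>fst G. dl u w \<le> max (dl u v) (dl v w)) \<and> (snd G u v \<longleftrightarrow> (lab u, lab v, dl u v) \<in> S))"

lemma cwD:
  assumes "cw r d G lab dl S"
  shows cwS: "S \<subseteq> {1..r} \<times> {1..r} \<times> {1..d}" and cwSsym: "\<And>i j l. (i, j, l) \<in> S \<longleftrightarrow> (j, i, l) \<in> S"
    and cwlab: "\<And>u. u \<in> fst G \<Longrightarrow> lab u \<in> {1..r}"
    and cwE: "\<And>u v. u \<in> fst G \<Longrightarrow> v \<in> fst G \<Longrightarrow> snd G u v \<longleftrightarrow> (lab u, lab v, dl u v) \<in> S"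
    and cwZ: "\<And>u v. u \<in> fst G \<Longrightarrow> v \<in> fst G \<Longrightarrow> dl u v = 0 \<longleftrightarrow> u = v"
    and cwSy: "\<And>u v. u \<in> fst G \<Longrightarrow> v \<in> fst G \<Longrightarrow> dl u v = dl v u"
    and cwle: "\<And>u v. u \<in> fst G \<Longrightarrow> v \<in> fst G \<Longrightarrow> dl u v \<le> d"
    and cwU: "\<And>u v w. u \<in> fst G \<Longrightarrow> v \<in> fst G \<Longrightarrow> w \<in> fst G \<Longrightarrow> dl u w \<le> max (dl u v) (dl v w)"
  using assms unfolding cw_def by simp_all

lemma cw_graph:
  assumes "cw r d G lab dl S" "\<forall>x y. snd G x y \<longrightarrow> x \<in> fst G \<and> y \<in> fst G"
  shows "is_graph G"
proof -
  note S = cwS[OF assms(1)] and Ssym = cwSsym[OF assms(1)] and E = cwE[OF assms(1)]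
    and Z = cwZ[OF assms(1)] and Sy = cwSy[OF assms(1)]
  show ?thesis unfolding is_graph_def
  proof (intro conjI allI impI)
    fix x y assume "snd G x y" thus "x \<in> fst G" "y \<in> fst G" using assms(2) by auto
  next
    fix x show "\<not> snd G x x"
    proof
      assume h: "snd G x x"
      hence x: "x \<in> fst G" using assms(2) by auto
      have "(lab x, lab x, dl x x) \<in> S" using E[OF x x] h by blast
      moreover have "dl x x = 0" using Z[OF x x] by simp
      ultimately show False using S by auto
    qed
  next
    fix x y assume h: "snd G x y"
    hence xy: "x \<in> fst G" "y \<in> fst G" using assms(2) by auto
    have "(lab x, lab y, dl x y) \<in> S" using E[OF xy] h by blast
    hence "(lab y, lab x, dl y x) \<in> S" using Ssym Sy[OF xy] by simp
    thus "snd G y x" using E[OF xy(2,1)] by blast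
  qed
qed

section \<open>From tree models to ultrametrics\<close>

lemma funpow_eq_mono:
  fixes p :: "'a \<Rightarrow> 'a"
  assumes "(p ^^ a) u = (p ^^ a) v" "a \<le> m"
  shows "(p ^^ m) u = (p ^^ m) v"
proof -
  have "m = (m - a) + a" using assms(2) by simp
  hence "p ^^ m = (p ^^ (m - a)) \<circ> (p ^^ a)" by (metis funpow_add)
  thus ?thesis using assms(1) by simp
qed

lemma hd_le: "(p ^^ d) u = (p ^^ d) v \<Longrightarrow> tree_half_dist p u v \<le> d"
  unfolding tree_half_dist_def by (rule Least_le)

lemma hd_eq: "(p ^^ d) u = (p ^^ d) v \<Longrightarrow>
   (p ^^ tree_half_dist p u v) u = (p ^^ tree_half_dist p u v) v"
  unfolding tree_half_dist_def by (rule LeastI)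

lemma hd_0: "(p ^^ d) u = (p ^^ d) v \<Longrightarrow> tree_half_dist p u v = 0 \<longleftrightarrow> u = v"
proof
  assume a: "(p ^^ d) u = (p ^^ d) v" "tree_half_dist p u v = 0"
  from hd_eq[OF a(1)] a(2) show "u = v" by simp
next
  assume "u = v" thus "tree_half_dist p u v = 0" unfolding tree_half_dist_def by simp
qed

lemma hd_sym: "tree_half_dist p u v = tree_half_dist p v u"
  unfolding tree_half_dist_def by (simp add: eq_commute)

lemma hd_ultra:
  assumes "(p ^^ d) u = (p ^^ d) v" "(p ^^ d) v = (p ^^ d) w"
  shows "tree_half_dist p u w \<le> max (tree_half_dist p u v) (tree_half_dist p v w)"
proof -
  let ?m = "max (tree_half_dist p u v) (tree_half_dist p v w)"
  have "(p ^^ ?m) u = (p ^^ ?m) v" using funpow_eq_mono[OF hd_eq[OF assms(1)]] by simp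
  moreover have "(p ^^ ?m) v = (p ^^ ?m) w" using funpow_eq_mono[OF hd_eq[OF assms(2)]] by simp
  ultimately have "(p ^^ ?m) u = (p ^^ ?m) w" by simp
  then show ?thesis unfolding tree_half_dist_def[of p u w] by (rule Least_le)
qed

lemma leaf_top:
  assumes "tree_model r d N rt p lab S" "tree_leaf N rt p u"
  shows "(p ^^ d) u = rt"
proof -
  have "u \<in> N" using assms(2) unfolding tree_leaf_def by auto
  hence ex: "\<exists>k. (p ^^ k) u = rt" using assms(1) unfolding tree_model_def rooted_tree_def by auto
  have "tree_depth rt p u = d" using assms \<open>u \<in> N\<close> unfolding tree_model_def by auto
  moreover have "(p ^^ (LEAST k. (p ^^ k) u = rt)) u = rt" by (rule LeastI_ex[OF ex])
  ultimately show ?thesis unfolding tree_depth_def by simp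
qed

lemma tm_to_cw:
  assumes "in_TM r d G"
  shows "\<exists>lab dl S. cw r d G lab dl S"
proof -
  obtain N :: "('a set \<times> nat) set" and rt p lab S where tm: "tree_model r d N rt p lab S"
    and iso: "graph_iso G (tm_graph N rt p lab S)"
    using assms unfolding in_TM_def by blast
  have tmS: "S \<subseteq> {1..r} \<times> {1..r} \<times> {1..d}" and tmsym: "\<forall>i j l. (i, j, l) \<in> S \<longleftrightarrow> (j, i, l) \<in> S"
    and tml: "\<forall>x\<in>N. tree_leaf N rt p x \<longrightarrow> tree_depth rt p x = d \<and> lab x \<in> {1..r}"
    using tm unfolding tree_model_def by blast+
  obtain f where bij0: "bij_betw f (fst G) (fst (tm_graph N rt p lab S))"
    and ed: "\<forall>x\<in>fst G. \<forall>y\<in>fst G. snd G x y \<longleftrightarrow> snd (tm_graph N rt p lab S) (f x) (f y)"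
    using iso unfolding graph_iso_def by blast
  have bij: "bij_betw f (fst G) {x. tree_leaf N rt p x}" using bij0 by (simp add: tm_graph_def)
  have lf: "x \<in> fst G \<Longrightarrow> tree_leaf N rt p (f x)" for x
    using bij_betw_apply[OF bij] by blast
  have top: "x \<in> fst G \<Longrightarrow> (p ^^ d) (f x) = rt" for x using leaf_top[OF tm lf] by blast
  have "cw r d G (\<lambda>x. lab (f x)) (\<lambda>x y. tree_half_dist p (f x) (f y)) S"
    unfolding cw_def
  proof (intro conjI ballI allI)
    show "S \<subseteq> {1..r} \<times> {1..r} \<times> {1..d}" by (rule tmS)
    show "(i, j, l) \<in> S \<longleftrightarrow> (j, i, l) \<in> S" for i j l using tmsym by blast
    fix u assume u: "u \<in> fst G"
    have "f u \<in> N" using lf[OF u] unfolding tree_leaf_def by blast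
    then show "lab (f u) \<in> {1..r}" using tml lf[OF u] by blast
    fix v assume v: "v \<in> fst G"
    have uv: "(p ^^ d) (f u) = (p ^^ d) (f v)" using top u v by simp
    show "tree_half_dist p (f u) (f v) \<le> d" by (rule hd_le[OF uv])
    have "inj_on f (fst G)" using bij unfolding bij_betw_def by blast
    then show "(tree_half_dist p (f u) (f v) = 0) = (u = v)"
      using hd_0[OF uv] u v unfolding inj_on_def by auto
    show "tree_half_dist p (f u) (f v) = tree_half_dist p (f v) (f u)" by (rule hd_sym)
    have "snd G u v \<longleftrightarrow> snd (tm_graph N rt p lab S) (f u) (f v)" using ed u v by blast
    then show "snd G u v = ((lab (f u), lab (f v), tree_half_dist p (f u) (f v)) \<in> S)"
      using lf[OF u] lf[OF v] by (simp add: tm_graph_def)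
    fix w assume w: "w \<in> fst G"
    have vw: "(p ^^ d) (f v) = (p ^^ d) (f w)" using top v w by simp
    show "tree_half_dist p (f u) (f w)
          \<le> max (tree_half_dist p (f u) (f v)) (tree_half_dist p (f v) (f w))"
      by (rule hd_ultra[OF uv vw])
  qed
  thus ?thesis by blast
qed

section \<open>From ultrametrics to tree models\<close>

locale um =
  fixes V :: "'a set" and dl :: "'a \<Rightarrow> 'a \<Rightarrow> nat" and d :: nat
  assumes le: "\<And>u v. u \<in> V \<Longrightarrow> v \<in> V \<Longrightarrow> dl u v \<le> d"
    and z: "\<And>u v. u \<in> V \<Longrightarrow> v \<in> V \<Longrightarrow> dl u v = 0 \<longleftrightarrow> u = v"
    and sy: "\<And>u v. u \<in> V \<Longrightarrow> v \<in> V \<Longrightarrow> dl u v = dl v u"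
    and ul: "\<And>u v w. u \<in> V \<Longrightarrow> v \<in> V \<Longrightarrow> w \<in> V \<Longrightarrow> dl u w \<le> max (dl u v) (dl v w)"
begin

definition ball :: "'a \<Rightarrow> nat \<Rightarrow> 'a set" where "ball v k = {w\<in>V. dl v w \<le> k}"
definition NN :: "('a set \<times> nat) set" where "NN = {(ball v (d - j), j) | v j. v \<in> V \<and> j \<le> d}"
definition pp :: "'a set \<times> nat \<Rightarrow> 'a set \<times> nat" where
  "pp x = ((\<Union>v\<in>fst x. ball v (Suc (d - snd x))), snd x - 1)"

lemma ball_mem: "v \<in> V \<Longrightarrow> v \<in> ball v k"
  unfolding ball_def using z[of v v] by auto

lemma ball_eq: assumes "u \<in> V" "v \<in> V" shows "ball u k = ball v k \<longleftrightarrow> dl u v \<le> k"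
proof
  assume "ball u k = ball v k"
  then have "v \<in> ball u k" using ball_mem[OF assms(2)] by simp
  then show "dl u v \<le> k" unfolding ball_def by simp
next
  assume h: "dl u v \<le> k"
  have "w \<in> V \<Longrightarrow> dl u w \<le> k \<longleftrightarrow> dl v w \<le> k" for w
  proof -
    assume w: "w \<in> V"
    have "dl u w \<le> max (dl u v) (dl v w)" using ul[OF assms w] .
    moreover have "dl v w \<le> max (dl v u) (dl u w)" using ul[OF assms(2,1) w] .
    moreover have "dl v u = dl u v" using sy assms by simp
    ultimately show ?thesis using h by auto
  qed
  then show "ball u k = ball v k" unfolding ball_def by auto
qed

lemma ball_d: "v \<in> V \<Longrightarrow> ball v d = V"
  unfolding ball_def using le by auto

lemma ball_0: "v \<in> V \<Longrightarrow> ball v 0 = {v}"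
  unfolding ball_def using z by auto

lemma union_ball: assumes "v \<in> V" shows "(\<Union>w\<in>ball v k. ball w (Suc k)) = ball v (Suc k)"
proof
  show "ball v (Suc k) \<subseteq> (\<Union>w\<in>ball v k. ball w (Suc k))" using ball_mem[OF assms] by auto
next
  show "(\<Union>w\<in>ball v k. ball w (Suc k)) \<subseteq> ball v (Suc k)"
  proof
    fix x assume "x \<in> (\<Union>w\<in>ball v k. ball w (Suc k))"
    then obtain w where w: "w \<in> V" "dl v w \<le> k" and x: "x \<in> V" "dl w x \<le> Suc k"
      unfolding ball_def by auto
    have "dl v x \<le> max (dl v w) (dl w x)" using ul[OF assms w(1) x(1)] .
    then show "x \<in> ball v (Suc k)" using w x unfolding ball_def by auto
  qed
qed

lemma pp_ball: assumes "v \<in> V" "0 < j" "j \<le> d"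
  shows "pp (ball v (d - j), j) = (ball v (d - j + 1), j - 1)"
  unfolding pp_def using union_ball[OF assms(1), of "d - j"] by simp

lemma pp_pow: assumes "v \<in> V" "k \<le> j" "j \<le> d"
  shows "(pp ^^ k) (ball v (d - j), j) = (ball v (d - j + k), j - k)"
  using assms(2)
proof (induction k)
  case 0 then show ?case by simp
next
  case (Suc k)
  moreover have "d - j + k = d - (j - k)" using Suc.prems assms by simp
  ultimately have IH: "(pp ^^ k) (ball v (d - j), j) = (ball v (d - (j - k)), j - k)" by simp
  have "(pp ^^ Suc k) (ball v (d - j), j) = pp (ball v (d - (j - k)), j - k)" using IH by simp
  also have "\<dots> = (ball v (d - (j - k) + 1), j - k - 1)"
    by (rule pp_ball) (use assms Suc.prems in auto)
  also have "\<dots> = (ball v (d - j + Suc k), j - Suc k)" using Suc.prems assms by (simp add: Suc_diff_le)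
  finally show ?case .
qed

lemma NN_rt: "x \<in> NN \<Longrightarrow> snd x = 0 \<Longrightarrow> x = (V, 0)"
  unfolding NN_def using ball_d by auto

lemma NN_single: "v \<in> V \<Longrightarrow> ({v}, d) \<in> NN"
  unfolding NN_def using ball_0 by fastforce

lemma leaf_iff: "tree_leaf NN (V, 0) pp x \<longleftrightarrow> (\<exists>v\<in>V. x = ({v}, d))"
proof
  assume lf: "tree_leaf NN (V, 0) pp x"
  then have "x \<in> NN" unfolding tree_leaf_def by simp
  then obtain v j where x: "x = (ball v (d - j), j)" and v: "v \<in> V" and j: "j \<le> d"
    unfolding NN_def by blast
  show "\<exists>v\<in>V. x = ({v}, d)"
  proof (cases "j < d")
    case True
    let ?y = "(ball v (d - (j + 1)), j + 1)"
    have "?y \<in> NN" unfolding NN_def using v True by fastforce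
    moreover have "?y \<noteq> (V, 0)" by simp
    moreover have "pp ?y = (ball v (d - (j + 1) + 1), j)" using pp_ball[OF v, of "j+1"] True by simp
    moreover have "d - (j + 1) + 1 = d - j" using True by simp
    ultimately have False using lf x unfolding tree_leaf_def by metis
    then show ?thesis ..
  next
    case False
    then have "j = d" using j by simp
    then show ?thesis using x v ball_0 by auto
  qed
next
  assume "\<exists>v\<in>V. x = ({v}, d)"
  then obtain v where v: "v \<in> V" and x: "x = ({v}, d)" by blast
  have "\<not> (\<exists>y\<in>NN. y \<noteq> (V, 0) \<and> pp y = x)"
  proof
    assume "\<exists>y\<in>NN. y \<noteq> (V, 0) \<and> pp y = x"
    then obtain y where y: "y \<in> NN" "y \<noteq> (V, 0)" "pp y = x" by blast
    then obtain w j where yy: "y = (ball w (d - j), j)" and j: "j \<le> d" unfolding NN_def by blast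
    have "snd y \<noteq> 0" using NN_rt y by blast
    moreover have "snd (pp y) = d" using y x by simp
    ultimately show False using yy j unfolding pp_def by simp
  qed
  then show "tree_leaf NN (V, 0) pp x" unfolding tree_leaf_def using NN_single[OF v] x by simp
qed

lemma leaf_pow: "v \<in> V \<Longrightarrow> k \<le> d \<Longrightarrow> (pp ^^ k) ({v}, d) = (ball v k, d - k)"
  using pp_pow[of v k d] ball_0 by simp

lemma leaf_depth: assumes "v \<in> V" shows "tree_depth (V, 0) pp ({v}, d) = d"
  unfolding tree_depth_def
proof (rule Least_equality)
  show "(pp ^^ d) ({v}, d) = (V, 0)" using leaf_pow[OF assms] ball_d[OF assms] by simp
next
  fix k assume h: "(pp ^^ k) ({v}, d) = (V, 0)"
  show "d \<le> k"
  proof (rule ccontr)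
    assume "\<not> d \<le> k"
    then show False using h leaf_pow[OF assms, of k] by simp
  qed
qed

lemma leaf_hd: assumes "u \<in> V" "v \<in> V"
  shows "tree_half_dist pp ({u}, d) ({v}, d) = dl u v"
  unfolding tree_half_dist_def
proof (rule Least_equality)
  show "(pp ^^ dl u v) ({u}, d) = (pp ^^ dl u v) ({v}, d)"
    using leaf_pow[OF assms(1)] leaf_pow[OF assms(2)] le[OF assms] ball_eq[OF assms] by simp
next
  fix k assume h: "(pp ^^ k) ({u}, d) = (pp ^^ k) ({v}, d)"
  show "dl u v \<le> k"
  proof (rule ccontr)
    assume a: "\<not> dl u v \<le> k"
    then have "k \<le> d" using le[OF assms] by simp
    then have "ball u k = ball v k" using h leaf_pow[OF assms(1)] leaf_pow[OF assms(2)] by simp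
    then show False using a ball_eq[OF assms] by simp
  qed
qed

end

lemma chain_pow: "((\<lambda>x. (fst x, snd x - 1)) ^^ k) (B, n) = (B, n - k)"
  by (induction k) auto

lemma cw_to_tm:
  fixes G :: "'a graph"
  assumes g: "is_graph G" and c: "cw r d G lab dl S"
  shows "in_TM r d G"
proof (cases "fst G = {}")
  case True
  define N :: "('a set \<times> nat) set" where "N = range (\<lambda>k. ({}, k))"
  define p :: "'a set \<times> nat \<Rightarrow> 'a set \<times> nat" where "p = (\<lambda>x. (fst x, snd x - 1))"
  have noleaf: "\<not> tree_leaf N ({}, 0) p x" for x
  proof
    assume "tree_leaf N ({}, 0) p x"
    then obtain k where x: "x = ({}, k)" and h: "\<not> (\<exists>y\<in>N. y \<noteq> ({}, 0) \<and> p y = x)"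
      unfolding tree_leaf_def N_def by auto
    have "({}, Suc k) \<in> N" unfolding N_def by simp
    moreover have "p ({}, Suc k) = x" unfolding p_def x by simp
    ultimately show False using h by blast
  qed
  have rt: "rooted_tree N ({}, 0) p"
    unfolding rooted_tree_def
  proof (intro conjI ballI impI)
    show "({}, 0) \<in> N" unfolding N_def by simp
  next
    fix x assume "x \<in> N" then show "p x \<in> N" unfolding N_def p_def by auto
  next
    fix x assume "x \<in> N"
    then obtain k where x: "x = ({}, k)" unfolding N_def by auto
    have "(p ^^ k) x = ({}, 0)" unfolding p_def x chain_pow by simp
    then show "\<exists>k. (p ^^ k) x = ({}, 0)" by blast
  qed
  have tm: "tree_model r d N ({}, 0) p (\<lambda>_. r + 1) S"
    unfolding tree_model_def using rt noleaf cwS[OF c] cwSsym[OF c] by blast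
  have "fst (tm_graph N ({}, 0) p (\<lambda>_. r + 1) S) = {}" unfolding tm_graph_def using noleaf by simp
  then have "graph_iso G (tm_graph N ({}, 0) p (\<lambda>_. r + 1) S)"
    unfolding graph_iso_def using True by (simp add: bij_betw_def)
  then show ?thesis unfolding in_TM_def using g tm by blast
next
  case False
  let ?V = "fst G"
  interpret um ?V dl d
    by unfold_locales (use cwle[OF c] cwZ[OF c] cwSy[OF c] cwU[OF c] in auto)
  obtain v0 where v0: "v0 \<in> ?V" using False by blast
  define labT where "labT = (\<lambda>x::'a set \<times> nat. if snd x = d then lab (SOME v. v \<in> fst x) else r + 1)"
  have labT_leaf: "v \<in> ?V \<Longrightarrow> labT ({v}, d) = lab v" for v unfolding labT_def by simp
  have rt: "rooted_tree NN (?V, 0) pp"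
    unfolding rooted_tree_def
  proof (intro conjI ballI impI)
    have "(ball v0 (d - 0), 0) \<in> NN" unfolding NN_def using v0 by blast
    then show "(?V, 0) \<in> NN" using ball_d[OF v0] by simp
  next
    fix x assume x: "x \<in> NN" "x \<noteq> (?V, 0)"
    then obtain v j where xx: "x = (ball v (d - j), j)" and v: "v \<in> ?V" and j: "j \<le> d"
      unfolding NN_def by blast
    have "j \<noteq> 0"
    proof
      assume "j = 0"
      then have "x = (?V, 0)" using xx ball_d[OF v] by simp
      with x(2) show False by simp
    qed
    moreover have "d - j + 1 = d - (j - 1)" using \<open>j \<noteq> 0\<close> j by simp
    ultimately have "pp x = (ball v (d - (j - 1)), j - 1)" using pp_ball[OF v _ j] xx by simp
    then show "pp x \<in> NN" unfolding NN_def using v j by auto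
  next
    fix x assume x: "x \<in> NN"
    then obtain v j where xx: "x = (ball v (d - j), j)" and v: "v \<in> ?V" and j: "j \<le> d"
      unfolding NN_def by blast
    have "(pp ^^ j) x = (?V, 0)" using pp_pow[OF v _ j, of j] xx ball_d[OF v] j by simp
    then show "\<exists>k. (pp ^^ k) x = (?V, 0)" by blast
  qed
  have tm: "tree_model r d NN (?V, 0) pp labT S"
    unfolding tree_model_def
  proof (intro conjI ballI impI)
    show "rooted_tree NN (?V, 0) pp" by (rule rt)
  next
    fix x assume "tree_leaf NN (?V, 0) pp x"
    then obtain v where v: "v \<in> ?V" and x: "x = ({v}, d)" using leaf_iff by blast
    show "tree_depth (?V, 0) pp x = d" using leaf_depth[OF v] x by simp
    show "labT x \<in> {1..r}" using labT_leaf[OF v] x cwlab[OF c v] by simp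
  next
    fix x assume x: "x \<in> NN" "\<not> tree_leaf NN (?V, 0) pp x"
    then obtain v j where xx: "x = (ball v (d - j), j)" and v: "v \<in> ?V" and j: "j \<le> d"
      unfolding NN_def by blast
    have "j \<noteq> d"
    proof
      assume "j = d"
      then have "x = ({v}, d)" using xx ball_0[OF v] by simp
      then show False using x(2) leaf_iff v by blast
    qed
    then show "labT x = r + 1" unfolding labT_def using xx by simp
  next
    show "S \<subseteq> {1..r} \<times> {1..r} \<times> {1..d}" by (rule cwS[OF c])
    show "\<forall>i j l. ((i, j, l) \<in> S) = ((j, i, l) \<in> S)" using cwSsym[OF c] by blast
  qed
  define f where "f = (\<lambda>v::'a. ({v}, d))"
  have bij: "bij_betw f ?V {x. tree_leaf NN (?V, 0) pp x}"
    unfolding bij_betw_def inj_on_def f_def using leaf_iff by auto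
  have ed: "\<forall>x\<in>?V. \<forall>y\<in>?V. snd G x y \<longleftrightarrow> snd (tm_graph NN (?V, 0) pp labT S) (f x) (f y)"
  proof (intro ballI)
    fix x y assume x: "x \<in> ?V" and y: "y \<in> ?V"
    have "snd (tm_graph NN (?V, 0) pp labT S) (f x) (f y) \<longleftrightarrow> (lab x, lab y, dl x y) \<in> S"
      unfolding tm_graph_def f_def using leaf_iff x y labT_leaf[OF x] labT_leaf[OF y] leaf_hd[OF x y]
      by auto
    then show "snd G x y \<longleftrightarrow> snd (tm_graph NN (?V, 0) pp labT S) (f x) (f y)"
      using cwE[OF c x y] by simp
  qed
  have "graph_iso G (tm_graph NN (?V, 0) pp labT S)"
    unfolding graph_iso_def using bij ed by (auto simp: tm_graph_def)
  then show ?thesis unfolding in_TM_def using g tm by blast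
qed

lemma ufD:
  assumes "ultrafilter_on I U"
  shows uf_sub: "\<And>A. A \<in> U \<Longrightarrow> A \<subseteq> I" and uf_I: "I \<in> U" and uf_empty: "{} \<notin> U"
    and uf_mono: "\<And>A B. A \<in> U \<Longrightarrow> A \<subseteq> B \<Longrightarrow> B \<subseteq> I \<Longrightarrow> B \<in> U"
    and uf_int: "\<And>A B. A \<in> U \<Longrightarrow> B \<in> U \<Longrightarrow> A \<inter> B \<in> U"
    and uf_compl: "\<And>A. A \<subseteq> I \<Longrightarrow> A \<notin> U \<Longrightarrow> I - A \<in> U"
proof -
  have c: "U \<subseteq> Pow I" "I \<in> U" "{} \<notin> U"
     "\<forall>A B. A \<in> U \<longrightarrow> A \<subseteq> B \<longrightarrow> B \<subseteq> I \<longrightarrow> B \<in> U"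
     "\<forall>A\<in>U. \<forall>B\<in>U. A \<inter> B \<in> U"
     "\<forall>A. A \<subseteq> I \<longrightarrow> A \<in> U \<or> I - A \<in> U"
    using assms unfolding ultrafilter_on_def by simp_all
  show "\<And>A. A \<in> U \<Longrightarrow> A \<subseteq> I" using c(1) by auto
  show "I \<in> U" "{} \<notin> U" using c(2,3) .
  show "\<And>A B. A \<in> U \<Longrightarrow> A \<subseteq> B \<Longrightarrow> B \<subseteq> I \<Longrightarrow> B \<in> U" using c(4) by blast
  show "\<And>A B. A \<in> U \<Longrightarrow> B \<in> U \<Longrightarrow> A \<inter> B \<in> U" using c(5) by blast
  show "\<And>A. A \<subseteq> I \<Longrightarrow> A \<notin> U \<Longrightarrow> I - A \<in> U" using c(6) by blast
qed

lemma uf_ne: "ultrafilter_on I U \<Longrightarrow> A \<in> U \<Longrightarrow> \<exists>i. i \<in> A"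
  using uf_empty[of I U] by (metis ex_in_conv)

lemma uf_fin:
  assumes uf: "ultrafilter_on I U" and fin: "finite A"
  shows "J \<in> U \<Longrightarrow> (\<forall>i\<in>J. h i \<in> A) \<Longrightarrow> \<exists>a\<in>A. {i\<in>J. h i = a} \<in> U"
  using fin
proof (induction A arbitrary: J rule: finite_induct)
  case empty
  then have "J = {}" by auto
  then show ?case using empty uf_empty[OF uf] by simp
next
  case (insert a A)
  show ?case
  proof (cases "{i\<in>J. h i = a} \<in> U")
    case True then show ?thesis by blast
  next
    case False
    have JI: "J \<subseteq> I" using uf_sub[OF uf insert.prems(1)] .
    then have "I - {i\<in>J. h i = a} \<in> U" using uf_compl[OF uf _ False] by auto
    then have "J \<inter> (I - {i\<in>J. h i = a}) \<in> U" using uf_int[OF uf insert.prems(1)] by blast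
    moreover have "J \<inter> (I - {i\<in>J. h i = a}) = {i\<in>J. h i \<noteq> a}" using JI by auto
    ultimately have J': "{i\<in>J. h i \<noteq> a} \<in> U" by simp
    have "\<forall>i\<in>{i\<in>J. h i \<noteq> a}. h i \<in> A" using insert.prems(2) by auto
    then obtain b where b: "b \<in> A" "{i\<in>{i\<in>J. h i \<noteq> a}. h i = b} \<in> U" using insert.IH[OF J'] by blast
    have "{i\<in>J. h i = b} \<in> U"
      by (rule uf_mono[OF uf b(2)]) (use JI in auto)
    then show ?thesis using b(1) by blast
  qed
qed

lemma ue_iff: "(f, g) \<in> ultra_equiv I U G \<longleftrightarrow>
   f \<in> (\<Pi>\<^sub>E i\<in>I. fst (G i)) \<and> g \<in> (\<Pi>\<^sub>E i\<in>I. fst (G i)) \<and> {i\<in>I. f i = g i} \<in> U"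
  unfolding ultra_equiv_def by simp

lemma ue_equiv:
  assumes uf: "ultrafilter_on I U"
  shows "equiv (\<Pi>\<^sub>E i\<in>I. fst (G i)) (ultra_equiv I U G)"
proof (rule equivI)
  show "ultra_equiv I U G \<subseteq> (\<Pi>\<^sub>E i\<in>I. fst (G i)) \<times> (\<Pi>\<^sub>E i\<in>I. fst (G i))"
    unfolding ultra_equiv_def by auto
  show "refl_on (\<Pi>\<^sub>E i\<in>I. fst (G i)) (ultra_equiv I U G)"
    unfolding refl_on_def ue_iff using uf_I[OF uf] by simp
  show "sym (ultra_equiv I U G)"
    unfolding sym_def ue_iff by (simp add: eq_commute)
  show "trans (ultra_equiv I U G)"
    unfolding trans_def
  proof (intro allI impI)
    fix f g h assume a: "(f, g) \<in> ultra_equiv I U G" "(g, h) \<in> ultra_equiv I U G"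
    have "{i\<in>I. f i = g i} \<inter> {i\<in>I. g i = h i} \<in> U" using a uf_int[OF uf] unfolding ue_iff by blast
    then have "{i\<in>I. f i = h i} \<in> U" by (rule uf_mono[OF uf]) auto
    then show "(f, h) \<in> ultra_equiv I U G" using a unfolding ue_iff by blast
  qed
qed

section \<open>Closure under ultraproducts\<close>

lemma ultra_closed:
  fixes G :: "'i \<Rightarrow> 'a graph"
  assumes uf: "ultrafilter_on I U" and all: "\<forall>i\<in>I. in_TM r d (G i)"
  shows "in_TM r d (ultraproduct I U G)"
proof -
  have "\<forall>i\<in>I. \<exists>t. cw r d (G i) (fst t) (fst (snd t)) (snd (snd t))"
  proof
    fix i assume "i \<in> I"
    then obtain lab dl S where "cw r d (G i) lab dl S" using tm_to_cw all by blast
    then show "\<exists>t. cw r d (G i) (fst t) (fst (snd t)) (snd (snd t))"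
      by (intro exI[of _ "(lab, dl, S)"]) simp
  qed
  from bchoice[OF this] obtain T where T: "\<forall>i\<in>I. cw r d (G i) (fst (T i)) (fst (snd (T i))) (snd (snd (T i)))"
    by blast
  define LB where "LB i = fst (T i)" for i
  define DL where "DL i = fst (snd (T i))" for i
  define SS where "SS i = snd (snd (T i))" for i
  have C: "i \<in> I \<Longrightarrow> cw r d (G i) (LB i) (DL i) (SS i)" for i using T LB_def DL_def SS_def by simp
  define P where "P = (\<Pi>\<^sub>E i\<in>I. fst (G i))"
  define R where "R = ultra_equiv I U G"
  have eq: "equiv P R" unfolding P_def R_def by (rule ue_equiv[OF uf])
  have fstU: "fst (ultraproduct I U G) = P // R" unfolding ultraproduct_def P_def R_def by simp
  have sndU: "snd (ultraproduct I U G) X Y \<longleftrightarrow> X \<in> P // R \<and> Y \<in> P // R \<and>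
      (\<exists>f\<in>X. \<exists>g\<in>Y. {i\<in>I. snd (G i) (f i) (g i)} \<in> U)" for X Y
    unfolding ultraproduct_def P_def R_def by simp
  define rep where "rep X = (SOME f. f \<in> X)" for X :: "('i \<Rightarrow> 'a) set"
  have rep_in: "X \<in> P // R \<Longrightarrow> rep X \<in> X" for X
  proof -
    assume "X \<in> P // R"
    then have "X \<noteq> {}" using in_quotient_imp_non_empty[OF eq] by blast
    then have "\<exists>f. f \<in> X" by blast
    then show "rep X \<in> X" unfolding rep_def by (rule someI_ex)
  qed
  have rep_P: "X \<in> P // R \<Longrightarrow> rep X \<in> P" for X
    using rep_in in_quotient_imp_subset[OF eq] by blast
  have rep_c: "X \<in> P // R \<Longrightarrow> i \<in> I \<Longrightarrow> rep X i \<in> fst (G i)" for X i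
    using rep_P[of X] unfolding P_def by (metis PiE_mem)
  have rep_agree: "X \<in> P // R \<Longrightarrow> f \<in> X \<Longrightarrow> {i\<in>I. f i = rep X i} \<in> U" for X f
  proof -
    assume X: "X \<in> P // R" and f: "f \<in> X"
    have "(f, rep X) \<in> R" using in_quotient_imp_in_rel[OF eq X] f rep_in[OF X] by blast
    then show ?thesis unfolding R_def ue_iff by blast
  qed
  define labU where "labU X = (SOME a. a \<in> {1..r} \<and> {i\<in>I. LB i (rep X i) = a} \<in> U)" for X
  define dlU where "dlU X Y = (SOME l. l \<in> {0..d} \<and> {i\<in>I. DL i (rep X i) (rep Y i) = l} \<in> U)" for X Y
  define SU where "SU = (SOME S. S \<in> Pow ({1..r} \<times> {1..r} \<times> {1..d}) \<and> {i\<in>I. SS i = S} \<in> U)"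
  have labU: "labU X \<in> {1..r} \<and> {i\<in>I. LB i (rep X i) = labU X} \<in> U" if X: "X \<in> P // R" for X
  proof -
    have "\<forall>i\<in>I. LB i (rep X i) \<in> {1..r}" proof
    fix i assume i: "i \<in> I"
    show "LB i (rep X i) \<in> {1..r}" by (rule cwlab[OF C[OF i] rep_c[OF X i]])
  qed
    from uf_fin[OF uf finite_atLeastAtMost uf_I[OF uf] this]
    have "\<exists>a. a \<in> {1..r} \<and> {i\<in>I. LB i (rep X i) = a} \<in> U" by blast
    then show ?thesis unfolding labU_def by (rule someI_ex)
  qed
  have dlU: "dlU X Y \<in> {0..d} \<and> {i\<in>I. DL i (rep X i) (rep Y i) = dlU X Y} \<in> U"
    if X: "X \<in> P // R" and Y: "Y \<in> P // R" for X Y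
  proof -
    have "\<forall>i\<in>I. DL i (rep X i) (rep Y i) \<in> {0..d}" proof
    fix i assume i: "i \<in> I"
    show "DL i (rep X i) (rep Y i) \<in> {0..d}" using cwle[OF C[OF i] rep_c[OF X i] rep_c[OF Y i]] by simp
  qed
    from uf_fin[OF uf finite_atLeastAtMost uf_I[OF uf] this]
    have "\<exists>l. l \<in> {0..d} \<and> {i\<in>I. DL i (rep X i) (rep Y i) = l} \<in> U" by blast
    then show ?thesis unfolding dlU_def by (rule someI_ex)
  qed
  have SU: "SU \<in> Pow ({1..r} \<times> {1..r} \<times> {1..d}) \<and> {i\<in>I. SS i = SU} \<in> U"
  proof -
    have "\<forall>i\<in>I. SS i \<in> Pow ({1..r} \<times> {1..r} \<times> {1..d})" proof
    fix i assume i: "i \<in> I"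
    show "SS i \<in> Pow ({1..r} \<times> {1..r} \<times> {1..d})" using cwS[OF C[OF i]] by simp
  qed
    moreover have "finite (Pow ({1..r::nat} \<times> {1..r::nat} \<times> {1..d::nat}))" by simp
    from uf_fin[OF uf this uf_I[OF uf]] \<open>\<forall>i\<in>I. SS i \<in> _\<close>
    have "\<exists>S. S \<in> Pow ({1..r} \<times> {1..r} \<times> {1..d}) \<and> {i\<in>I. SS i = S} \<in> U" by blast
    then show ?thesis unfolding SU_def by (rule someI_ex)
  qed
  have pick2: "A \<in> U \<Longrightarrow> B \<in> U \<Longrightarrow> \<exists>i\<in>I. i \<in> A \<and> i \<in> B" for A B
  proof -
    assume "A \<in> U" "B \<in> U"
    then have AB: "A \<inter> B \<in> U" by (rule uf_int[OF uf])
    then obtain i where "i \<in> A \<inter> B" using uf_ne[OF uf] by blast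
    moreover have "A \<inter> B \<subseteq> I" using uf_sub[OF uf AB] .
    ultimately show ?thesis by blast
  qed
  have cwU: "cw r d (ultraproduct I U G) labU dlU SU"
    unfolding cw_def fstU
  proof (intro conjI ballI allI)
    show "SU \<subseteq> {1..r} \<times> {1..r} \<times> {1..d}" using SU by blast
  next
    fix a b l
    obtain i where i: "i \<in> I" "SS i = SU" using SU uf_ne[OF uf] by blast
    show "(a, b, l) \<in> SU \<longleftrightarrow> (b, a, l) \<in> SU" using cwSsym[OF C[OF i(1)]] i(2) by simp
  next
    fix X assume X: "X \<in> P // R"
    show "labU X \<in> {1..r}" using labU[OF X] by blast
    fix Y assume Y: "Y \<in> P // R"
    show "dlU X Y \<le> d" using dlU[OF X Y] by simp
    show "dlU X Y = 0 \<longleftrightarrow> X = Y"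
    proof
      assume h: "dlU X Y = 0"
      have "{i\<in>I. DL i (rep X i) (rep Y i) = dlU X Y} \<subseteq> {i\<in>I. rep X i = rep Y i}"
      proof
        fix i assume "i \<in> {i\<in>I. DL i (rep X i) (rep Y i) = dlU X Y}"
        then have i: "i \<in> I" "DL i (rep X i) (rep Y i) = 0" using h by auto
        then show "i \<in> {i\<in>I. rep X i = rep Y i}" using cwZ[OF C[OF i(1)] rep_c[OF X i(1)] rep_c[OF Y i(1)]] by simp
      qed
      then have "{i\<in>I. rep X i = rep Y i} \<in> U" using uf_mono[OF uf] dlU[OF X Y] by blast
      then have "(rep X, rep Y) \<in> R" unfolding R_def ue_iff using rep_P[OF X] rep_P[OF Y] P_def by blast
      then show "X = Y" using quotient_eq_iff[OF eq X Y rep_in[OF X] rep_in[OF Y]] by blast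
    next
      assume "X = Y"
      obtain i where i: "i \<in> {i\<in>I. DL i (rep X i) (rep X i) = dlU X X}" using dlU[OF X X] uf_ne[OF uf] by blast
      then have iI: "i \<in> I" by simp
      have "DL i (rep X i) (rep X i) = 0" using cwZ[OF C[OF iI] rep_c[OF X iI] rep_c[OF X iI]] by simp
      then show "dlU X Y = 0" using \<open>X = Y\<close> i by simp
    qed
    show "dlU X Y = dlU Y X"
    proof -
      obtain i where i: "i \<in> I" "DL i (rep X i) (rep Y i) = dlU X Y" "DL i (rep Y i) (rep X i) = dlU Y X"
        using pick2[OF conjunct2[OF dlU[OF X Y]] conjunct2[OF dlU[OF Y X]]] by blast
      then show ?thesis using cwSy[OF C[OF i(1)] rep_c[OF X i(1)] rep_c[OF Y i(1)]] by simp
    qed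
    show "snd (ultraproduct I U G) X Y \<longleftrightarrow> (labU X, labU Y, dlU X Y) \<in> SU"
    proof -
      define E where "E = {i\<in>I. snd (G i) (rep X i) (rep Y i)}"
      define B where "B = {i\<in>I. SS i = SU} \<inter> {i\<in>I. LB i (rep X i) = labU X} \<inter>
         {i\<in>I. LB i (rep Y i) = labU Y} \<inter> {i\<in>I. DL i (rep X i) (rep Y i) = dlU X Y}"
      have B: "B \<in> U" unfolding B_def using SU labU[OF X] labU[OF Y] dlU[OF X Y] uf_int[OF uf] by simp
      have Bi: "i \<in> B \<Longrightarrow> i \<in> E \<longleftrightarrow> (labU X, labU Y, dlU X Y) \<in> SU" for i
      proof -
        assume i: "i \<in> B"
        then have iI: "i \<in> I" unfolding B_def by blast
        show ?thesis using cwE[OF C[OF iI] rep_c[OF X iI] rep_c[OF Y iI]] i unfolding B_def E_def by auto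
      qed
      have "snd (ultraproduct I U G) X Y \<longleftrightarrow> E \<in> U"
      proof
        assume "snd (ultraproduct I U G) X Y"
        then obtain f g where f: "f \<in> X" and g: "g \<in> Y" and fg: "{i\<in>I. snd (G i) (f i) (g i)} \<in> U"
          using sndU by blast
        have "{i\<in>I. snd (G i) (f i) (g i)} \<inter> {i\<in>I. f i = rep X i} \<inter> {i\<in>I. g i = rep Y i} \<in> U"
          using fg rep_agree[OF X f] rep_agree[OF Y g] uf_int[OF uf] by simp
        then show "E \<in> U" by (rule uf_mono[OF uf]) (auto simp: E_def)
      next
        assume "E \<in> U"
        then show "snd (ultraproduct I U G) X Y" using sndU X Y rep_in[OF X] rep_in[OF Y]
          unfolding E_def by blast
      qed
      also have "\<dots> \<longleftrightarrow> (labU X, labU Y, dlU X Y) \<in> SU"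
      proof
        assume "E \<in> U"
        then obtain i where "i \<in> E" "i \<in> B" using pick2[OF _ B] by blast
        then show "(labU X, labU Y, dlU X Y) \<in> SU" using Bi by blast
      next
        assume "(labU X, labU Y, dlU X Y) \<in> SU"
        then have "B \<subseteq> E" using Bi by blast
        then show "E \<in> U" by (rule uf_mono[OF uf B]) (auto simp: E_def)
      qed
      finally show ?thesis .
    qed
    fix W assume W: "W \<in> P // R"
    show "dlU X W \<le> max (dlU X Y) (dlU Y W)"
    proof -
      have "{i\<in>I. DL i (rep X i) (rep Y i) = dlU X Y} \<inter> {i\<in>I. DL i (rep Y i) (rep W i) = dlU Y W}
         \<inter> {i\<in>I. DL i (rep X i) (rep W i) = dlU X W} \<in> U"
        using dlU[OF X Y] dlU[OF Y W] dlU[OF X W] uf_int[OF uf] by simp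
      then obtain i where i: "i \<in> I" "DL i (rep X i) (rep Y i) = dlU X Y"
        "DL i (rep Y i) (rep W i) = dlU Y W" "DL i (rep X i) (rep W i) = dlU X W"
        using uf_ne[OF uf] by blast
      then show ?thesis using cwU[OF C[OF i(1)] rep_c[OF X i(1)] rep_c[OF Y i(1)] rep_c[OF W i(1)]]
        by simp
    qed
  qed
  have "is_graph (ultraproduct I U G)"
    by (rule cw_graph[OF cwU]) (simp add: sndU fstU)
  then show ?thesis using cw_to_tm cwU by blast
qed

section \<open>Closure under ultraroots\<close>

lemma root_closed:
  fixes H :: "'b graph" and I :: "'j set"
  assumes g: "is_graph H" and uf: "ultrafilter_on I U"
    and tm: "in_TM r d (ultraproduct I U (\<lambda>_. H))"
  shows "in_TM r d H"
proof -
  let ?G = "\<lambda>_::'j. H"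
  obtain lab dl S where c: "cw r d (ultraproduct I U ?G) lab dl S" using tm_to_cw[OF tm] by blast
  define P where "P = (\<Pi>\<^sub>E i\<in>I. fst (?G i))"
  define R where "R = ultra_equiv I U ?G"
  have eq: "equiv P R" unfolding P_def R_def by (rule ue_equiv[OF uf])
  have fstU: "fst (ultraproduct I U ?G) = P // R" unfolding ultraproduct_def P_def R_def by simp
  have sndU: "snd (ultraproduct I U ?G) X Y \<longleftrightarrow> X \<in> P // R \<and> Y \<in> P // R \<and>
      (\<exists>f\<in>X. \<exists>g\<in>Y. {i\<in>I. snd H (f i) (g i)} \<in> U)" for X Y
    unfolding ultraproduct_def P_def R_def by simp
  define cst where "cst x = (\<lambda>i\<in>I. x)" for x :: 'b
  define dg where "dg x = R `` {cst x}" for x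
  have cstP: "x \<in> fst H \<Longrightarrow> cst x \<in> P" for x unfolding cst_def P_def by simp
  have dgV: "x \<in> fst H \<Longrightarrow> dg x \<in> fst (ultraproduct I U ?G)" for x
    unfolding fstU dg_def using cstP by (rule quotientI)
  have dgself: "x \<in> fst H \<Longrightarrow> cst x \<in> dg x" for x
    unfolding dg_def using equiv_class_self[OF eq cstP] .
  have dginj: "x \<in> fst H \<Longrightarrow> y \<in> fst H \<Longrightarrow> dg x = dg y \<longleftrightarrow> x = y" for x y
  proof -
    assume x: "x \<in> fst H" and y: "y \<in> fst H"
    have "dg x = dg y \<longleftrightarrow> (cst x, cst y) \<in> R"
      unfolding dg_def by (rule eq_equiv_class_iff[OF eq cstP[OF x] cstP[OF y]])
    also have "\<dots> \<longleftrightarrow> {i\<in>I. x = y} \<in> U"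
    proof -
      have "{i\<in>I. cst x i = cst y i} = {i\<in>I. x = y}" unfolding cst_def by auto
      then show ?thesis unfolding R_def ue_iff using cstP[OF x] cstP[OF y] unfolding P_def by simp
    qed
    also have "\<dots> \<longleftrightarrow> x = y" using uf_I[OF uf] uf_empty[OF uf] by (cases "x = y") simp_all
    finally show ?thesis .
  qed
  have dgE: "x \<in> fst H \<Longrightarrow> y \<in> fst H \<Longrightarrow> snd H x y \<longleftrightarrow> snd (ultraproduct I U ?G) (dg x) (dg y)" for x y
  proof -
    assume x: "x \<in> fst H" and y: "y \<in> fst H"
    show ?thesis
    proof
      assume h: "snd H x y"
      have "{i\<in>I. snd H (cst x i) (cst y i)} = I" using h unfolding cst_def by auto
      then have "{i\<in>I. snd H (cst x i) (cst y i)} \<in> U" using uf_I[OF uf] by simp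
      then show "snd (ultraproduct I U ?G) (dg x) (dg y)"
        using sndU dgV[OF x] dgV[OF y] dgself[OF x] dgself[OF y] fstU by blast
    next
      assume "snd (ultraproduct I U ?G) (dg x) (dg y)"
      then obtain f g where f: "f \<in> dg x" and gg: "g \<in> dg y" and fg: "{i\<in>I. snd H (f i) (g i)} \<in> U"
        using sndU by blast
      have "(cst x, f) \<in> R" using f unfolding dg_def by simp
      then have fx: "{i\<in>I. x = f i} \<in> U" unfolding R_def ue_iff cst_def
        by (simp cong: conj_cong)
      have "(cst y, g) \<in> R" using gg unfolding dg_def by simp
      then have gy: "{i\<in>I. y = g i} \<in> U" unfolding R_def ue_iff cst_def
        by (simp cong: conj_cong)
      have "{i\<in>I. snd H (f i) (g i)} \<inter> {i\<in>I. x = f i} \<inter> {i\<in>I. y = g i} \<in> U"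
        using fg fx gy uf_int[OF uf] by simp
      then obtain i where "i \<in> {i\<in>I. snd H (f i) (g i)} \<inter> {i\<in>I. x = f i} \<inter> {i\<in>I. y = g i}"
        using uf_ne[OF uf] by blast
      then show "snd H x y" by simp
    qed
  qed
  have "cw r d H (\<lambda>x. lab (dg x)) (\<lambda>x y. dl (dg x) (dg y)) S"
    unfolding cw_def
  proof (intro conjI ballI allI)
    show "S \<subseteq> {1..r} \<times> {1..r} \<times> {1..d}" by (rule cwS[OF c])
    show "(i, j, l) \<in> S \<longleftrightarrow> (j, i, l) \<in> S" for i j l by (rule cwSsym[OF c])
    fix u assume u: "u \<in> fst H"
    show "lab (dg u) \<in> {1..r}" by (rule cwlab[OF c dgV[OF u]])
    fix v assume v: "v \<in> fst H"
    show "dl (dg u) (dg v) \<le> d" by (rule cwle[OF c dgV[OF u] dgV[OF v]])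
    show "dl (dg u) (dg v) = 0 \<longleftrightarrow> u = v" using cwZ[OF c dgV[OF u] dgV[OF v]] dginj[OF u v] by simp
    show "dl (dg u) (dg v) = dl (dg v) (dg u)" by (rule cwSy[OF c dgV[OF u] dgV[OF v]])
    show "snd H u v \<longleftrightarrow> (lab (dg u), lab (dg v), dl (dg u) (dg v)) \<in> S"
      using dgE[OF u v] cwE[OF c dgV[OF u] dgV[OF v]] by simp
    fix w assume w: "w \<in> fst H"
    show "dl (dg u) (dg w) \<le> max (dl (dg u) (dg v)) (dl (dg v) (dg w))"
      by (rule cwU[OF c dgV[OF u] dgV[OF v] dgV[OF w]])
  qed
  then show ?thesis using cw_to_tm[OF g] by blast
qed

theorem theorem2:
  fixes r d :: nat
  shows "(\<forall>(I :: 'i set) U (G :: 'i \<Rightarrow> 'a graph).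
            ultrafilter_on I U \<and> (\<forall>i\<in>I. in_TM r d (G i)) \<longrightarrow> in_TM r d (ultraproduct I U G))
       \<and> (\<forall>(H :: 'b graph) (I :: 'j set) U.
            is_graph H \<and> ultrafilter_on I U \<and> in_TM r d (ultraproduct I U (\<lambda>_. H)) \<longrightarrow> in_TM r d H)"
  using ultra_closed root_closed by blast

end
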